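(* Let $k\ge2$ be an integer. Then for all $n\in\mathbb Z$, $L_k^{(n)}L_k^{(-n)}=H$, where $H=(L_k^{(0)})^2$.
   Context: Fix an integer $k\ge2$. Let $Q_k$ be the $k\times k$ matrix whose first row is all ones, with $(Q_k)_{i+1,i}=1$ for $1\le i\le k-1$ and all other entries $0$, and for $r\in\mathbb Z$ let $Q_k^r$ denote its $r$-th power. The generalized Lucas sequence of order $k$, $(l_{k,n})_{n\in\mathbb Z}$, is the two-sided sequence satisfying $l_{k,n+k}=l_{k,n+k-1}+\dots+l_{k,n}$ for all $n\in\mathbb Z$ with initial values $l_{k,r}=\operatorname{trace}(Q_k^r)$ for $0\le r\le k-1$ (so $l_{k,0}=k$ and $l_{k,r}=2^r-1$ for $1\le r\le k-1$). For $n\in\mathbb Z$ the generalized Lucas matrix $L_k^{(n)}$ is the $k\times k$ matrix with entries $(L_k^{(n)})_{i,1}=l_{k,k+n-i}$ and $(L_k^{(n)})_{i,j}=\sum_{m=n-i+j-1}^{k+n-i-1} l_{k,m}$ for $2\le j\le k$, $1\le i\le k$. *)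

theory Defs
  imports "Jordan_Normal_Form.Matrix"
begin

text \<open>The generalized Lucas sequence of order k, two-sided (indexed by int):
  the unique sequence satisfying l(n+k) = l(n+k-1) + ... + l(n) for all integers n,
  with l(0) = k and l(r) = 2^r - 1 for 1 \<le> r \<le> k-1 (these are trace(Q_k^r)).\<close>
definition lucas_seq :: "nat \<Rightarrow> int \<Rightarrow> int" where
  "lucas_seq k = (THE f. (\<forall>n. f (n + int k) = (\<Sum>j<k. f (n + int j)))
                        \<and> f 0 = int k
                        \<and> (\<forall>r. 1 \<le> r \<and> r < k \<longrightarrow> f (int r) = 2 ^ r - 1))"

text \<open>The generalized Lucas matrix L_k^(n), with 0-based indices i' = i-1, j' = j-1:
  entry (i',0) = l(k+n-i'-1); entry (i',j') for j' \<ge> 1 is the sum of l(m)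
  for m from n-i'+j'-1 to k+n-i'-2.\<close>
definition lucas_mat :: "nat \<Rightarrow> int \<Rightarrow> int mat" where
  "lucas_mat k n = mat k k (\<lambda>(i, j).
     if j = 0 then lucas_seq k (int k + n - int i - 1)
     else (\<Sum>m\<in>{n - int i + int j - 1 .. int k + n - int i - 2}. lucas_seq k m))"

end

theory Submission
  imports Defs
begin

function fw :: "nat \<Rightarrow> (nat \<Rightarrow> int) \<Rightarrow> nat \<Rightarrow> int" where
  "fw k w r = (if r < k then w r else (\<Sum>j<k. fw k w (r - k + j)))"
  by auto
termination by (relation "measure (\<lambda>(k,w,r). r)") auto

function bw :: "nat \<Rightarrow> (nat \<Rightarrow> int) \<Rightarrow> nat \<Rightarrow> int" where
  "bw k w r = (if k = 0 \<or> r < k then w (k - 1 - r) else bw k w (r - k) - (\<Sum>j\<in>{1..<k}. bw k w (r - j)))"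
  by auto
termination by (relation "measure (\<lambda>(k,w,r). r)") auto

declare fw.simps[simp del] bw.simps[simp del]

definition gseq :: "nat \<Rightarrow> (nat \<Rightarrow> int) \<Rightarrow> int \<Rightarrow> int" where
  "gseq k w n = (if n \<ge> 0 then fw k w (nat n) else bw k w (nat (int k - 1 - n)))"

lemma gseq_low: "n \<le> int k - 1 \<Longrightarrow> gseq k w n = bw k w (nat (int k - 1 - n))"
proof (cases "n \<ge> 0")
  case True
  assume a: "n \<le> int k - 1"
  then have "nat n < k" using True by linarith
  have e1: "nat (int k - 1 - n) < k" using True a by linarith
  have e2: "k - 1 - nat (int k - 1 - n) = nat n" using True a by linarith
  show ?thesis using True \<open>nat n < k\<close> e1 e2
    by (simp add: gseq_def fw.simps[of k w "nat n"] bw.simps[of k w "nat (int k - 1 - n)"])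
qed (simp add: gseq_def)

lemma gseq_rec:
  assumes "k \<ge> 1"
  shows "gseq k w (n + int k) = (\<Sum>j<k. gseq k w (n + int j))"
proof (cases "n \<ge> 0")
  case True
  have "gseq k w (n + int k) = fw k w (nat n + k)" using True by (simp add: gseq_def nat_add_distrib)
  also have "\<dots> = (\<Sum>j<k. fw k w (nat n + j))" by (simp add: fw.simps[of k w "nat n + k"])
  also have "\<dots> = (\<Sum>j<k. gseq k w (n + int j))"
    using True by (intro sum.cong) (auto simp: gseq_def nat_add_distrib)
  finally show ?thesis .
next
  case False
  define r where "r = nat (int k - 1 - n)"
  have rk: "r \<ge> k" using False r_def by linarith
  have "gseq k w n = bw k w r" using False by (simp add: gseq_def r_def)
  also have "\<dots> = bw k w (r - k) - (\<Sum>j\<in>{1..<k}. bw k w (r - j))"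
    using rk assms by (simp add: bw.simps[of k w r])
  also have "bw k w (r - k) = gseq k w (n + int k)"
    using False rk by (subst gseq_low) (auto simp: r_def intro!: arg_cong[where f="bw k w"])
  also have "(\<Sum>j\<in>{1..<k}. bw k w (r - j)) = (\<Sum>j\<in>{1..<k}. gseq k w (n + int j))"
    using False rk by (intro sum.cong refl, subst gseq_low) (auto simp: r_def intro!: arg_cong[where f="bw k w"])
  finally have e: "gseq k w n = gseq k w (n + int k) - (\<Sum>j\<in>{1..<k}. gseq k w (n + int j))" .
  have "(\<Sum>j<k. gseq k w (n + int j)) = gseq k w n + (\<Sum>j\<in>{1..<k}. gseq k w (n + int j))"
  proof -
    have "{..<k} = insert 0 {1..<k}" using assms by auto
    then show ?thesis by simp
  qed
  then show ?thesis using e by simp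
qed


definition recp :: "nat \<Rightarrow> (int \<Rightarrow> int) \<Rightarrow> bool" where
  "recp k f = (\<forall>n. f (n + int k) = (\<Sum>j<k. f (n + int j)))"

lemma rec_back:
  assumes "recp k f" "k \<ge> 1"
  shows "f n = f (n + int k) - (\<Sum>j\<in>{1..<k}. f (n + int j))"
proof -
  have "{..<k} = insert 0 {1..<k}" using assms by auto
  then show ?thesis using assms(1) unfolding recp_def by (simp add: algebra_simps)
qed

lemma uniq:
  assumes k: "k \<ge> 2" and r1: "recp k f1" and r2: "recp k f2"
    and i0: "f1 0 = f2 0" and ir: "\<And>r. 1 \<le> r \<Longrightarrow> r < k \<Longrightarrow> f1 (int r) = f2 (int r)"
  shows "f1 = f2"
proof -
  have nn: "f1 (int r) = f2 (int r)" for r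
  proof (induction r rule: less_induct)
    case (less r)
    show ?case
    proof (cases "r < k")
      case True
      then show ?thesis using i0 ir by (cases "r = 0") auto
    next
      case False
      then have e: "int r = int (r - k) + int k" by simp
      have "f1 (int r) = (\<Sum>j<k. f1 (int (r - k) + int j))" using r1 unfolding recp_def e by simp
      also have "\<dots> = (\<Sum>j<k. f2 (int (r - k) + int j))"
      proof (intro sum.cong refl)
        fix j assume "j \<in> {..<k}"
        then have "r - k + j < r" using False k by auto
        then show "f1 (int (r - k) + int j) = f2 (int (r - k) + int j)"
          using less.IH[of "r - k + j"] by simp
      qed
      also have "\<dots> = f2 (int r)" using r2 unfolding recp_def e by simp
      finally show ?thesis .
    qed
  qed
  have ng: "\<forall>n. n \<ge> - int m \<longrightarrow> f1 n = f2 n" for m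
  proof (induction m)
    case 0
    then show ?case using nn by (metis add.inverse_neutral nonneg_int_cases of_nat_0)
  next
    case (Suc m)
    show ?case
    proof (intro allI impI)
      fix n :: int assume a: "n \<ge> - int (Suc m)"
      show "f1 n = f2 n"
      proof (cases "n \<ge> - int m")
        case True then show ?thesis using Suc by auto
      next
        case False
        have "f1 n = f1 (n + int k) - (\<Sum>j\<in>{1..<k}. f1 (n + int j))" by (rule rec_back[OF r1]) (use k in simp)
        also have "\<dots> = f2 (n + int k) - (\<Sum>j\<in>{1..<k}. f2 (n + int j))"
          using Suc.IH a False k by (intro arg_cong2[where f="(-)"] sum.cong refl) auto
        also have "\<dots> = f2 n" by (rule rec_back[OF r2, symmetric]) (use k in simp)
        finally show ?thesis .
      qed
    qed
  qed
  show ?thesis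
  proof
    fix n :: int
    show "f1 n = f2 n" using ng[of "nat (- n)"] by simp
  qed
qed

lemma lucas_props:
  assumes k: "k \<ge> 2"
  shows "recp k (lucas_seq k)" "lucas_seq k 0 = int k"
    "\<And>r. 1 \<le> r \<Longrightarrow> r < k \<Longrightarrow> lucas_seq k (int r) = 2 ^ r - 1"
proof -
  define P where "P = (\<lambda>f::int\<Rightarrow>int. (\<forall>n. f (n + int k) = (\<Sum>j<k. f (n + int j)))
                        \<and> f 0 = int k
                        \<and> (\<forall>r. 1 \<le> r \<and> r < k \<longrightarrow> f (int r) = 2 ^ r - 1))"
  define w where "w = (\<lambda>r::nat. if r = 0 then int k else 2 ^ r - 1)"
  have g0: "gseq k w (int r) = w r" if "r < k" for r
    using that by (simp add: gseq_def fw.simps)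
  have "P (gseq k w)"
    unfolding P_def
  proof (intro conjI allI impI)
    show "gseq k w (n + int k) = (\<Sum>j<k. gseq k w (n + int j))" for n
      by (rule gseq_rec) (use k in simp)
    show "gseq k w 0 = int k" using g0[of 0] k by (simp add: w_def)
    show "gseq k w (int r) = 2 ^ r - 1" if "1 \<le> r \<and> r < k" for r
      using g0[of r] that by (simp add: w_def)
  qed
  moreover have "f = gseq k w" if "P f" for f
    using that \<open>P (gseq k w)\<close> k unfolding P_def
    by (intro uniq[OF k]) (auto simp: recp_def)
  ultimately have "\<exists>!f. P f" by blast
  then have "P (lucas_seq k)" unfolding lucas_seq_def P_def[symmetric] by (rule theI')
  then show "recp k (lucas_seq k)" "lucas_seq k 0 = int k"
    "\<And>r. 1 \<le> r \<Longrightarrow> r < k \<Longrightarrow> lucas_seq k (int r) = 2 ^ r - 1"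
    unfolding P_def recp_def by auto
qed


lemma isum_up:
  fixes f :: "int \<Rightarrow> int"
  assumes "c = b + 1" "a \<le> c"
  shows "(\<Sum>m\<in>{a..c}. f m) = f c + (\<Sum>m\<in>{a..b}. f m)"
proof -
  have "{a..c} = insert c {a..b}" using assms by auto
  then show ?thesis using assms by simp
qed

lemma isum_low:
  fixes f :: "int \<Rightarrow> int"
  assumes "c = a + 1" "a \<le> b"
  shows "(\<Sum>m\<in>{a..b}. f m) = f a + (\<Sum>m\<in>{c..b}. f m)"
proof -
  have "{a..b} = insert a {c..b}" using assms by auto
  then show ?thesis using assms by simp
qed

lemma isum_lessThan:
  fixes f :: "int \<Rightarrow> int"
  shows "(\<Sum>m\<in>{a..a + int k - 1}. f m) = (\<Sum>j<k. f (a + int j))"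
proof (induction k)
  case 0
  then show ?case by simp
next
  case (Suc k)
  have "(\<Sum>m\<in>{a..a + int (Suc k) - 1}. f m) = f (a + int k) + (\<Sum>m\<in>{a..a + int k - 1}. f m)"
    by (subst isum_up[where b="a + int k - 1"]) auto
  then show ?case using Suc by simp
qed

lemma rec_rev:
  assumes "recp k l"
  shows "(\<Sum>r<k. l (a - int r)) = l (a + 1)"
proof -
  have "(\<Sum>r<k. l (a - int r)) = (\<Sum>r<k. l (a + 1 - int k + int (k - Suc r)))"
    by (intro sum.cong refl) (auto simp: of_nat_diff)
  also have "\<dots> = (\<Sum>r<k. l (a + 1 - int k + int r))"
    by (rule sum.nat_diff_reindex)
  also have "\<dots> = l (a + 1 - int k + int k)" using assms unfolding recp_def by metis
  finally show ?thesis by simp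
qed

definition E :: "nat \<Rightarrow> (int \<Rightarrow> int) \<Rightarrow> int \<Rightarrow> nat \<Rightarrow> nat \<Rightarrow> int" where
  "E k l n i j = (if j = 0 then l (int k + n - int i - 1)
     else (\<Sum>m\<in>{n - int i + int j - 1 .. int k + n - int i - 2}. l m))"

definition Lm :: "nat \<Rightarrow> (int \<Rightarrow> int) \<Rightarrow> int \<Rightarrow> int mat" where
  "Lm k l n = mat k k (\<lambda>(i, j). E k l n i j)"

definition Qm :: "nat \<Rightarrow> int mat" where
  "Qm k = mat k k (\<lambda>(i, j). if i = 0 \<or> i = j + 1 then 1 else 0)"

lemma lucas_mat_Lm: "lucas_mat k n = Lm k (lucas_seq k) n"
  unfolding lucas_mat_def Lm_def E_def by simp

definition F :: "nat \<Rightarrow> (int \<Rightarrow> int) \<Rightarrow> int \<Rightarrow> nat \<Rightarrow> nat \<Rightarrow> int" where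
  "F k l n i j = (\<Sum>m\<in>{n - int i + int j - 1 .. int k + n - int i - 2}. l m)"

lemma E_pos: "j \<noteq> 0 \<Longrightarrow> E k l n i j = F k l n i j"
  unfolding E_def F_def by simp

lemma E_shift_col:
  assumes rec: "recp k l" and k: "k \<ge> 2" and ij: "i < k" "j < k"
  shows "E k l (n + 1) i j = E k l n i 0 + (if j + 1 < k then E k l n i (j + 1) else 0)"
proof (cases "j = 0")
  case True
  have "E k l n i 0 + E k l n i 1 = l (int k + n - int i - 1) + F k l n i 1"
    by (simp add: E_def F_def)
  also have "\<dots> = (\<Sum>m\<in>{n - int i .. int k + n - int i - 1}. l m)"
    unfolding F_def by (subst isum_up[of "int k + n - int i - 1" "int k + n - int i - 2"]) (use k in auto)
  also have "\<dots> = (\<Sum>j<k. l (n - int i + int j))"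
    using isum_lessThan[of l "n - int i" k] by (simp add: algebra_simps)
  also have "\<dots> = l (n - int i + int k)" using rec unfolding recp_def by simp
  finally show ?thesis using True k by (simp add: E_def algebra_simps)
next
  case False
  have "E k l (n + 1) i j = (\<Sum>m\<in>{n - int i + int j .. int k + n - int i - 1}. l m)"
    using False by (simp add: E_def algebra_simps)
  also have "\<dots> = l (int k + n - int i - 1) + (\<Sum>m\<in>{n - int i + int j .. int k + n - int i - 2}. l m)"
    by (rule isum_up) (use ij in auto)
  also have "(\<Sum>m\<in>{n - int i + int j .. int k + n - int i - 2}. l m) = (if j + 1 < k then E k l n i (j + 1) else 0)"
    using ij by (auto simp: E_def algebra_simps)
  finally show ?thesis by (simp add: E_def)
qed

lemma F_sum:
  assumes rec: "recp k l" and "j \<le> k"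
  shows "(\<Sum>r<k. F k l n r j) = (\<Sum>m\<in>{n + int j .. int k + n - 1}. l m)"
  using assms(2)
proof (induction "k - j" arbitrary: j)
  case 0
  then have "j = k" by simp
  then show ?case by (simp add: F_def)
next
  case (Suc d)
  then have jk: "j < k" by simp
  have IH: "(\<Sum>r<k. F k l n r (j + 1)) = (\<Sum>m\<in>{n + int (j + 1) .. int k + n - 1}. l m)"
    using Suc by simp
  have "F k l n r j = l (n + int j - 1 - int r) + F k l n r (j + 1)" if "r < k" for r
    unfolding F_def by (subst isum_low[where c="n - int r + int j"]) (use jk in \<open>auto simp: algebra_simps\<close>)
  then have "(\<Sum>r<k. F k l n r j) = (\<Sum>r<k. l (n + int j - 1 - int r)) + (\<Sum>r<k. F k l n r (j + 1))"
    by (simp add: sum.distrib)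
  also have "(\<Sum>r<k. l (n + int j - 1 - int r)) = l (n + int j)"
    using rec_rev[OF rec, of "n + int j - 1"] by simp
  also have "l (n + int j) + (\<Sum>r<k. F k l n r (j + 1)) = (\<Sum>m\<in>{n + int j .. int k + n - 1}. l m)"
  proof -
    have X: "(\<Sum>m\<in>{n + int j .. int k + n - 1}. l m) = l (n + int j) + (\<Sum>m\<in>{n + int j + 1 .. int k + n - 1}. l m)"
      by (rule isum_low) (use jk in auto)
    show ?thesis unfolding IH X by (simp add: algebra_simps)
  qed
  finally show ?case .
qed

lemma E_shift_row:
  assumes rec: "recp k l" and k: "k \<ge> 2" and ij: "i < k" "j < k"
  shows "E k l (n + 1) i j = (if i = 0 then (\<Sum>r<k. E k l n r j) else E k l n (i - 1) j)"
proof (cases "i = 0")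
  case False
  then show ?thesis by (simp add: E_def of_nat_diff algebra_simps)
next
  case True
  show ?thesis
  proof (cases "j = 0")
    case True
    have "(\<Sum>r<k. E k l n r 0) = (\<Sum>r<k. l (int k + n - 1 - int r))"
      by (simp add: E_def algebra_simps)
    also have "\<dots> = l (int k + n)" using rec_rev[OF rec, of "int k + n - 1"] by simp
    finally show ?thesis using True \<open>i = 0\<close> by (simp add: E_def)
  next
    case False
    have "(\<Sum>r<k. E k l n r j) = (\<Sum>r<k. F k l n r j)" using False by (simp add: E_pos)
    also have "\<dots> = (\<Sum>m\<in>{n + int j .. int k + n - 1}. l m)" using F_sum[OF rec] ij by simp
    finally show ?thesis using False \<open>i = 0\<close> by (simp add: E_def algebra_simps)
  qed
qed


lemma sum_two:
  fixes g :: "nat \<Rightarrow> int"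
  assumes "k \<ge> 1"
  shows "(\<Sum>r\<in>{0..<k}. g r * (if r = 0 \<or> r = j + 1 then 1 else 0)) = g 0 + (if j + 1 < k then g (j + 1) else 0)"
proof -
  have "(\<Sum>r\<in>{0..<k}. g r * (if r = 0 \<or> r = j + 1 then 1 else 0))
      = (\<Sum>r\<in>{0..<k}. (if r = 0 then g r else 0) + (if r = j + 1 then g r else 0))"
    by (intro sum.cong refl) auto
  also have "\<dots> = g 0 + (if j + 1 < k then g (j + 1) else 0)"
    using assms by (simp add: sum.distrib)
  finally show ?thesis .
qed

lemma sum_row:
  fixes g :: "nat \<Rightarrow> int"
  assumes "i < k"
  shows "(\<Sum>r\<in>{0..<k}. (if i = 0 \<or> i = r + 1 then 1 else 0) * g r) = (if i = 0 then (\<Sum>r<k. g r) else g (i - 1))"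
proof (cases "i = 0")
  case True
  then show ?thesis by (simp add: lessThan_atLeast0)
next
  case False
  have "(\<Sum>r\<in>{0..<k}. (if i = 0 \<or> i = r + 1 then 1 else 0) * g r) = (\<Sum>r\<in>{0..<k}. if r = i - 1 then g r else 0)"
    using False by (intro sum.cong refl) auto
  also have "\<dots> = g (i - 1)" using assms by simp
  finally show ?thesis using False by simp
qed

lemma LQ:
  assumes rec: "recp k l" and k: "k \<ge> 2"
  shows "Lm k l n * Qm k = Lm k l (n + 1)"
proof (rule eq_matI)
  fix i j assume ij: "i < dim_row (Lm k l (n + 1))" "j < dim_col (Lm k l (n + 1))"
  then have ij': "i < k" "j < k" by (auto simp: Lm_def)
  have "(Lm k l n * Qm k) $$ (i, j) = (\<Sum>r\<in>{0..<k}. E k l n i r * (if r = 0 \<or> r = j + 1 then 1 else 0))"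
    using ij' by (simp add: Lm_def Qm_def index_mult_mat scalar_prod_def row_def col_def)
  also have "\<dots> = E k l n i 0 + (if j + 1 < k then E k l n i (j + 1) else 0)"
    using k by (rule_tac sum_two) simp
  also have "\<dots> = E k l (n + 1) i j" using E_shift_col[OF rec k ij'] by simp
  finally show "(Lm k l n * Qm k) $$ (i, j) = Lm k l (n + 1) $$ (i, j)" using ij' by (simp add: Lm_def)
qed (auto simp: Lm_def Qm_def)

lemma QL:
  assumes rec: "recp k l" and k: "k \<ge> 2"
  shows "Qm k * Lm k l n = Lm k l (n + 1)"
proof (rule eq_matI)
  fix i j assume ij: "i < dim_row (Lm k l (n + 1))" "j < dim_col (Lm k l (n + 1))"
  then have ij': "i < k" "j < k" by (auto simp: Lm_def)
  have "(Qm k * Lm k l n) $$ (i, j) = (\<Sum>r\<in>{0..<k}. (if i = 0 \<or> i = r + 1 then 1 else 0) * E k l n r j)"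
    using ij' by (simp add: Lm_def Qm_def index_mult_mat scalar_prod_def row_def col_def)
  also have "\<dots> = (if i = 0 then (\<Sum>r<k. E k l n r j) else E k l n (i - 1) j)"
    by (rule sum_row) (use ij' in simp)
  also have "\<dots> = E k l (n + 1) i j" using E_shift_row[OF rec k ij'] by simp
  finally show "(Qm k * Lm k l n) $$ (i, j) = Lm k l (n + 1) $$ (i, j)" using ij' by (simp add: Lm_def)
qed (auto simp: Lm_def Qm_def)

theorem theorem6:
  fixes k :: nat and n :: int
  assumes "k \<ge> 2"
  shows "lucas_mat k n * lucas_mat k (- n) = lucas_mat k 0 * lucas_mat k 0"
proof -
  define l where "l = lucas_seq k"
  have rec: "recp k l" using lucas_props(1)[OF assms] by (simp add: l_def)
  have C: "\<And>m. Lm k l m \<in> carrier_mat k k" "Qm k \<in> carrier_mat k k" by (auto simp: Lm_def Qm_def)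
  have "Lm k l n * Lm k l (- n) = Lm k l 0 * Lm k l 0"
  proof (induction n rule: int_induct[where k = 0])
    case base
    then show ?case by simp
  next
    case (step1 i)
    have "Lm k l (i + 1) * Lm k l (- (i + 1)) = Lm k l i * Qm k * Lm k l (- i - 1)"
    proof -
      have "- (i + 1) = - i - 1" by simp
      then show ?thesis using LQ[OF rec assms, of i] by simp
    qed
    also have "\<dots> = Lm k l i * (Qm k * Lm k l (- i - 1))"
      using C by (rule_tac assoc_mult_mat) auto
    also have "Qm k * Lm k l (- i - 1) = Lm k l (- i)" using QL[OF rec assms, of "- i - 1"] by simp
    finally show ?case using step1 by simp
  next
    case (step2 i)
    have "Lm k l (i - 1) * Lm k l (- (i - 1)) = Lm k l (i - 1) * (Qm k * Lm k l (- i))"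
    proof -
      have "- (i - 1) = - i + 1" by simp
      then show ?thesis using QL[OF rec assms, of "- i"] by simp
    qed
    also have "\<dots> = Lm k l (i - 1) * Qm k * Lm k l (- i)"
      using C by (rule_tac assoc_mult_mat[symmetric]) auto
    also have "Lm k l (i - 1) * Qm k = Lm k l i" using LQ[OF rec assms, of "i - 1"] by simp
    finally show ?case using step2 by simp
  qed
  then show ?thesis by (simp add: lucas_mat_Lm l_def)
qed

end
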